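(* Let $A\in\mathbb{R}^{m\times n}$ and $b\in\mathbb{R}^m$ be such that $S_+=\{z\in\mathbb{R}^n_+ : Az=b\}$ is nonempty, and let $x_0\in\mathbb{R}^n_{++}$. Let $(x_k)$ be generated by ("Hadamard descent+") $$\alpha_k=\min\left\{\frac{f(x_k)}{\|\nabla f(x_k)\|^2_{x_k}},\ \frac{1.79}{\|\nabla f(x_k)\|_\infty}\right\},\qquad x_{k+1}=x_k\circ\big(\mathbf{1}-\alpha_k\nabla f(x_k)+\alpha_k^2\nabla f(x_k)^2\big),$$ with $f(x)=\frac12\|Ax-b\|_2^2$ (if $\nabla f(x_k)=0$ the sequence is kept constant from then on). Then $(x_k)$ converges to some $x^*\in S_+$, and for all $k\ge0$ $$\min_{0\le i\le k} f(x_i)\le \frac{4R\,(R+\|x^*\|_1)\max_{j\le n}\|A_{:j}\|_2^2}{k+1},\qquad R=D_h(x^*,x_0).$$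
   Context: $\mathbb{R}^n_{++}$ is the strictly positive orthant; $\circ$ is componentwise multiplication and $\nabla f(x_k)^2$ is the componentwise square; $\mathbf{1}$ the all-ones vector; $\nabla f(x)=A^\top(Ax-b)$; $\|v\|_x^2=\sum_i x_iv_i^2$; $A_{:j}$ is the $j$-th column of $A$. $h(x)=\sum_i x_i(\log x_i-1)$ (with $0\log0=0$) and $D_h(x,y)=\sum_i\big(x_i\log\frac{x_i}{y_i}-x_i+y_i\big)$ for $x\in\mathbb{R}^n_+$, $y\in\mathbb{R}^n_{++}$. *)

theory Defs
  imports "HOL-Analysis.Analysis"
begin

definition lsq_f :: "real^'n^'m \<Rightarrow> real^'m \<Rightarrow> real^'n \<Rightarrow> real" where
  "lsq_f A b x = (1/2) * (norm (A *v x - b))\<^sup>2"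

definition lsq_grad :: "real^'n^'m \<Rightarrow> real^'m \<Rightarrow> real^'n \<Rightarrow> real^'n" where
  "lsq_grad A b x = transpose A *v (A *v x - b)"

definition local_norm_sq :: "real^'n \<Rightarrow> real^'n \<Rightarrow> real" where
  "local_norm_sq x v = (\<Sum>i\<in>UNIV. x$i * (v$i)\<^sup>2)"

definition sup_norm :: "real^'n \<Rightarrow> real" where
  "sup_norm v = Max ((\<lambda>i. \<bar>v$i\<bar>) ` UNIV)"

definition one_norm :: "real^'n \<Rightarrow> real" where
  "one_norm v = (\<Sum>i\<in>UNIV. \<bar>v$i\<bar>)"

definition hd_step_size :: "real^'n^'m \<Rightarrow> real^'m \<Rightarrow> real^'n \<Rightarrow> real" where
  "hd_step_size A b x =
     min (lsq_f A b x / local_norm_sq x (lsq_grad A b x)) (1.79 / sup_norm (lsq_grad A b x))"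

definition hd_update :: "real^'n^'m \<Rightarrow> real^'m \<Rightarrow> real^'n \<Rightarrow> real^'n" where
  "hd_update A b x =
     (if lsq_grad A b x = 0 then x
      else (let g = lsq_grad A b x; a = hd_step_size A b x
            in \<chi> i. x$i * (1 - a * g$i + a\<^sup>2 * (g$i)\<^sup>2)))"

text \<open>Bregman divergence of the entropy h(x) = sum x_i (log x_i - 1); note 0 * ln(0/y) = 0 in HOL,
  matching the convention 0 log 0 = 0.\<close>
definition bregman_ent :: "real^'n \<Rightarrow> real^'n \<Rightarrow> real" where
  "bregman_ent x y = (\<Sum>i\<in>UNIV. x$i * ln (x$i / y$i) - x$i + y$i)"

definition max_col_norm_sq :: "real^'n^'m \<Rightarrow> real" where
  "max_col_norm_sq A = Max ((\<lambda>j. \<Sum>i\<in>UNIV. (A$i$j)\<^sup>2) ` UNIV)"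

definition feasible_set :: "real^'n^'m \<Rightarrow> real^'m \<Rightarrow> (real^'n) set" where
  "feasible_set A b = {z. (\<forall>i. z$i \<ge> 0) \<and> A *v z = b}"

end

theory Submission
  imports Defs
begin


lemma exp_179: "exp (179/100::real) \<le> 59941/10000"
proof -
  define x :: real where "x = 179/100"
  obtain t where t: "\<bar>t\<bar> \<le> \<bar>x\<bar>" "exp x = (\<Sum>m<10. (x ^ m) / fact m) + (exp t / fact 10) * x ^ 10"
    using Maclaurin_exp_le[of x 10] by blast
  have "exp t \<le> exp x" using t(1) by (simp add: x_def)
  hence "(exp t / fact 10) * x ^ 10 \<le> (exp x / fact 10) * x ^ 10"
    by (intro mult_right_mono divide_right_mono) (auto simp: x_def)
  hence "exp x \<le> (\<Sum>m<10. (x ^ m) / fact m) + (exp x / fact 10) * x ^ 10"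
    using t(2) by linarith
  hence h: "exp x * (1 - x^10 / fact 10) \<le> (\<Sum>m<10. (x ^ m) / fact m)"
    by (simp add: algebra_simps)
  have s: "(\<Sum>m<10. (x ^ m) / fact m) = (\<Sum>m\<in>{0,1,2,3,4,5,6,7,8,9}. (x ^ m) / fact m)"
    by (rule sum.cong) auto
  have P: "(\<Sum>m\<in>{0,1,2,3,4,5,6,7,8,9}. (x ^ m) / fact m) \<le> 59894/10000"
    by (simp add: x_def fact_numeral power_divide)
  have Q: "x^10 / fact 10 \<le> 1/10000"
    by (simp add: x_def fact_numeral power_divide)
  have R1: "exp x * (9999/10000) \<le> exp x * (1 - x^10 / fact 10)"
    using Q by (intro mult_left_mono) auto
  have R2: "exp x * (1 - x^10 / fact 10) \<le> 59894/10000" using h s P by linarith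
  have "exp x * (9999/10000) \<le> 59894/10000" using order_trans[OF R1 R2] .
  thus ?thesis unfolding x_def by simp
qed



lemma exp_le_quad:
  fixes s :: real assumes "0 \<le> s" "s \<le> 179/100" shows "exp s \<le> 1 + s + s\<^sup>2"
proof -
  define F where "F = (\<lambda>s::real. (1 + s + s\<^sup>2) * exp (-s))"
  have D: "DERIV F x :> (x * (1 - x)) * exp (-x)" for x
    unfolding F_def by (rule derivative_eq_intros refl | simp)+ (simp add: algebra_simps power2_eq_square)
  have "1 \<le> F s"
  proof (cases "s \<le> 1")
    case True
    have "F 0 \<le> F s"
      by (rule DERIV_nonneg_imp_nondecreasing[OF assms(1)]) 
         (use D True in \<open>auto intro!: exI mult_nonneg_nonneg\<close>)
    thus ?thesis by (simp add: F_def)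
  next
    case False
    have np: "x*(1-x)*exp(-x) \<le> 0" if "1 \<le> x" for x :: real
      using that by (intro mult_nonpos_nonneg mult_nonneg_nonpos) auto
    have "F (179/100) \<le> F s"
      by (rule DERIV_nonpos_imp_nonincreasing[OF assms(2)])
         (use D False np in \<open>force\<close>)
    moreover have "1 \<le> F (179/100)"
    proof -
      have "exp (179/100::real) * 1 \<le> (1 + 179/100 + (179/100)\<^sup>2)" using exp_179 by (simp add: power2_eq_square)
      hence "exp (179/100::real) * exp(-(179/100)) \<le> (1 + 179/100 + (179/100)\<^sup>2) * exp(-(179/100))"
        by (intro mult_right_mono) auto
      thus ?thesis by (simp add: F_def exp_minus field_simps)
    qed
    ultimately show ?thesis by simp
  qed
  thus ?thesis by (simp add: F_def exp_minus field_simps)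
qed

lemma exp_neg_le_quad:
  fixes t :: real assumes "0 \<le> t" shows "exp (-t) \<le> 1 - t + t\<^sup>2"
proof -
  define G where "G = (\<lambda>s::real. (1 - s + s\<^sup>2) * exp s)"
  have D: "DERIV G x :> (x + x\<^sup>2) * exp x" for x
    unfolding G_def by (rule derivative_eq_intros refl | simp)+ (simp add: algebra_simps power2_eq_square)
  have "G 0 \<le> G t"
    by (rule DERIV_nonneg_imp_nondecreasing[OF assms(1)]) (use D in \<open>auto intro!: exI\<close>)
  hence "1 \<le> (1 - t + t\<^sup>2) * exp t" by (simp add: G_def)
  thus ?thesis by (simp add: exp_minus field_simps)
qed

lemma ln_phi:
  fixes t :: real assumes "\<bar>t\<bar> \<le> 179/100" shows "-t \<le> ln (1 - t + t\<^sup>2)"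
proof -
  have pos: "0 < 1 - t + t\<^sup>2"
    using sum_power2_ge_zero[of "t - 1/2" 0] by (simp add: power2_eq_square algebra_simps)
  have "exp (-t) \<le> 1 - t + t\<^sup>2"
  proof (cases "t \<ge> 0")
    case True thus ?thesis by (rule exp_neg_le_quad)
  next
    case False thus ?thesis using exp_le_quad[of "-t"] assms by simp
  qed
  thus ?thesis using pos by (simp add: ln_ge_iff)
qed

lemma ln_half: fixes z :: real assumes "0 < z" shows "ln z \<le> z/2"
proof -
  have "ln z = 2 * ln (sqrt z)" using assms by (simp add: ln_sqrt)
  also have "\<dots> \<le> 2 * (sqrt z - 1)" using ln_le_minus_one[of "sqrt z"] assms by simp
  also have "\<dots> \<le> z/2"
    using sum_power2_ge_zero[of "sqrt z - 2" 0] assms by (simp add: power2_eq_square algebra_simps)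
  finally show ?thesis .
qed

lemma bterm_hell:
  fixes u y :: real assumes "0 \<le> u" "0 < y"
  shows "(sqrt u - sqrt y)\<^sup>2 \<le> u * ln (u / y) - u + y"
proof (cases "u = 0")
  case True thus ?thesis using assms by simp
next
  case False
  hence u: "0 < u" using assms by simp
  have "ln (sqrt y / sqrt u) \<le> sqrt y / sqrt u - 1" using ln_le_minus_one u assms by simp
  hence "ln (u / y) \<ge> 2 * (1 - sqrt y / sqrt u)"
    using u assms by (simp add: ln_div ln_sqrt)
  hence "u * ln (u / y) \<ge> u * (2 * (1 - sqrt y / sqrt u))" using u by (simp add: mult_left_mono)
  moreover have "u * (2 * (1 - sqrt y / sqrt u)) = 2*u - 2 * sqrt u * sqrt y"
    using u by (simp add: field_simps)
  moreover have "(sqrt u - sqrt y)\<^sup>2 = u - 2 * sqrt u * sqrt y + y"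
    using u assms by (simp add: power2_diff)
  ultimately show ?thesis by linarith
qed

lemma bterm_lin:
  fixes u y :: real assumes "0 \<le> u" "0 < y"
  shows "y/2 - u \<le> u * ln (u / y) - u + y"
proof (cases "u = 0")
  case True thus ?thesis using assms by simp
next
  case False
  hence u: "0 < u" using assms by simp
  have "ln (y/u) \<le> (y/u)/2" using ln_half[of "y/u"] u assms by simp
  hence "u * ln (y/u) \<le> u * ((y/u)/2)" using u by (intro mult_left_mono) auto
  also have "u * ((y/u)/2) = y/2" using u by simp
  finally have "u * ln (y/u) \<le> y/2" .
  moreover have "ln (u/y) = - ln (y/u)" using u assms by (simp add: ln_div)
  ultimately show ?thesis using u by simp
qed



lemma phi_pos: "0 < 1 - t + (t::real)\<^sup>2"
  using sum_power2_ge_zero[of "t - 1/2" 0] by (simp add: power2_eq_square algebra_simps)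

lemma inner_grad:
  assumes z: "z \<in> feasible_set A b"
  shows "lsq_grad A b x \<bullet> (x - z) = 2 * lsq_f A b x"
proof -
  have Az: "A *v z = b" using z by (simp add: feasible_set_def)
  have "lsq_grad A b x \<bullet> (x - z) = (A *v x - b) \<bullet> (A *v (x - z))"
    by (simp add: lsq_grad_def dot_lmul_matrix)
  also have "A *v (x - z) = A *v x - b" using Az by (simp add: matrix_vector_mult_diff_distrib)
  finally show ?thesis by (simp add: lsq_f_def power2_norm_eq_inner)
qed

lemma grad_zero_f: assumes "z \<in> feasible_set A b" "lsq_grad A b x = 0" shows "lsq_f A b x = 0"
  using inner_grad[OF assms(1), of x] assms(2) by simp

lemma f_nonneg: "0 \<le> lsq_f A b x" by (simp add: lsq_f_def)

lemma bregman_nonneg: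
  assumes "\<forall>i. 0 \<le> z$i" "\<forall>i. 0 < y$i" shows "0 \<le> bregman_ent z y"
  unfolding bregman_ent_def
  by (rule sum_nonneg) (smt (verit) assms bterm_hell zero_le_power2)

lemma bregman_term_le:
  assumes "\<forall>i. 0 \<le> z$i" "\<forall>i. 0 < y$i"
  shows "(sqrt (z$i) - sqrt (y$i))\<^sup>2 \<le> bregman_ent z y"
proof -
  have "(sqrt (z$i) - sqrt (y$i))\<^sup>2 \<le> z$i * ln (z$i / y$i) - z$i + y$i"
    using bterm_hell assms by auto
  also have "\<dots> \<le> bregman_ent z y" unfolding bregman_ent_def
    by (rule member_le_sum[where f="\<lambda>i. z$i * ln (z$i / y$i) - z$i + y$i"])
       (auto, smt (verit) assms bterm_hell zero_le_power2)
  finally show ?thesis .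
qed

lemma sum_bound:
  assumes "\<forall>i. 0 \<le> z$i" "\<forall>i. 0 < y$i"
  shows "(\<Sum>i\<in>UNIV. y$i) \<le> 2 * (bregman_ent z y + one_norm z)"
proof -
  have "(\<Sum>i\<in>UNIV. y$i/2 - z$i) \<le> bregman_ent z y"
    unfolding bregman_ent_def by (rule sum_mono) (use bterm_lin assms in auto)
  moreover have "one_norm z = (\<Sum>i\<in>UNIV. z$i)" using assms by (simp add: one_norm_def)
  ultimately show ?thesis by (simp add: sum_subtractf sum_divide_distrib[symmetric])
qed

lemma grad_comp: "lsq_grad A b x $ j = (\<Sum>i\<in>UNIV. A$i$j * (A *v x - b)$i)"
  by (simp add: lsq_grad_def matrix_vector_mult_def transpose_def mult.commute)

lemma sup_norm_ge: "\<bar>v$i\<bar> \<le> sup_norm v"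
  unfolding sup_norm_def by (rule Max_ge) auto

lemma sup_norm_attained: "\<exists>i. sup_norm v = \<bar>v$i\<bar>"
proof -
  have "Max ((\<lambda>i. \<bar>v$i\<bar>) ` UNIV) \<in> (\<lambda>i. \<bar>v$i\<bar>) ` UNIV" by (rule Max_in) auto
  then obtain i where "Max ((\<lambda>i. \<bar>v$i\<bar>) ` UNIV) = \<bar>v$i\<bar>" by blast
  thus ?thesis unfolding sup_norm_def by blast
qed

lemma descent:
  fixes A :: "real^'n^'m"
  assumes xpos: "\<forall>i. 0 < x$i" and z: "z \<in> feasible_set A b"
    and g0: "lsq_grad A b x \<noteq> 0"
  shows "bregman_ent z (hd_update A b x) \<le> bregman_ent z x - hd_step_size A b x * lsq_f A b x"
    and "0 < hd_step_size A b x"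
    and "\<forall>i. 0 < hd_update A b x $ i"
proof -
  define g where "g = lsq_grad A b x"
  define a where "a = hd_step_size A b x"
  define f where "f = lsq_f A b x"
  define N where "N = local_norm_sq x g"
  define S where "S = sup_norm g"
  have zn: "\<forall>i. 0 \<le> z$i" using z by (simp add: feasible_set_def)
  obtain j where gj: "g$j \<noteq> 0" using g0 unfolding g_def by (metis vec_eq_iff zero_index)
  have f2: "g \<bullet> (x - z) = 2 * f" using inner_grad[OF z] by (simp add: g_def f_def)
  have Npos: "0 < N"
  proof -
    have "0 < x$j * (g$j)\<^sup>2" using xpos gj by simp
    also have "\<dots> \<le> N" unfolding N_def local_norm_sq_def
      by (rule member_le_sum[where f="\<lambda>i. x$i * (g$i)\<^sup>2"]) (use xpos in \<open>simp_all add: less_imp_le\<close>)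
    finally show ?thesis .
  qed
  have Spos: "0 < S" using sup_norm_ge[of g j] gj unfolding S_def by linarith
  have fpos: "0 < f"
  proof -
    have "f \<noteq> 0"
    proof
      assume "f = 0"
      hence "A *v x - b = 0" by (simp add: f_def lsq_f_def)
      hence "g = 0" by (simp add: g_def lsq_grad_def)
      thus False using gj by simp
    qed
    thus ?thesis using f_nonneg[of A b x] f_def by simp
  qed
  have a_def': "a = min (f / N) (179/100 / S)"
    by (simp add: a_def hd_step_size_def f_def N_def S_def g_def)
  have apos: "0 < a" using a_def' Npos Spos fpos by simp
  have aN: "a \<le> f / N" using a_def' by simp
  have aS: "a \<le> 179/100 / S" using a_def' by simp
  have tb: "\<bar>a * g$i\<bar> \<le> 179/100" for i
  proof -
    have "\<bar>a * g$i\<bar> = a * \<bar>g$i\<bar>" using apos by (simp add: abs_mult)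
    also have "\<dots> \<le> a * S" using sup_norm_ge[of g i] apos unfolding S_def by (simp add: mult_left_mono)
    also have "\<dots> \<le> 179/100" using aS Spos by (simp add: field_simps)
    finally show ?thesis .
  qed
  define \<phi> where "\<phi> i = 1 - a * g$i + (a * g$i)\<^sup>2" for i
  have phipos: "0 < \<phi> i" for i unfolding \<phi>_def by (rule phi_pos)
  have upd: "hd_update A b x $ i = x$i * \<phi> i" for i
    using g0 by (simp add: hd_update_def Let_def \<phi>_def g_def a_def power_mult_distrib)
  show "\<forall>i. 0 < hd_update A b x $ i" using upd phipos xpos by simp
  show "0 < hd_step_size A b x" using apos a_def by simp
  have tm: "z$i * ln (z$i / (x$i * \<phi> i)) - z$i + x$i * \<phi> i
      \<le> (z$i * ln (z$i / x$i) - z$i + x$i) + (z$i * (a * g$i) - x$i * (a * g$i) + x$i * (a * g$i)\<^sup>2)" for i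
  proof (cases "z$i = 0")
    case True
    thus ?thesis by (simp add: \<phi>_def algebra_simps)
  next
    case False
    hence zp: "0 < z$i" using zn by (simp add: less_le)
    have L: "ln (z$i / (x$i * \<phi> i)) = ln (z$i / x$i) - ln (\<phi> i)"
    proof -
      have xi: "0 < x$i" using xpos by simp
      have "ln (z$i / (x$i * \<phi> i)) = ln (z$i) - ln (x$i * \<phi> i)"
        using zp xi phipos[of i] by (intro ln_divide_pos) auto
      also have "ln (x$i * \<phi> i) = ln (x$i) + ln (\<phi> i)" using xi phipos[of i] by (intro ln_mult_pos) auto
      also have "ln (z$i / x$i) = ln (z$i) - ln (x$i)" using zp xi by (intro ln_divide_pos) auto
      ultimately show ?thesis by simp
    qed
    have "- (a * g$i) \<le> ln (\<phi> i)" unfolding \<phi>_def by (rule ln_phi[OF tb])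
    hence "z$i * (- (a * g$i)) \<le> z$i * ln (\<phi> i)" using zp by (intro mult_left_mono) auto
    hence M: "- (z$i * ln (\<phi> i)) \<le> z$i * (a * g$i)" by simp
    have P: "x$i * \<phi> i = x$i - x$i*(a*g$i) + x$i*(a*g$i)\<^sup>2" by (simp add: \<phi>_def algebra_simps)
    have "z$i * ln (z$i / (x$i * \<phi> i)) = z$i * ln (z$i / x$i) - z$i * ln (\<phi> i)"
      unfolding L by (simp add: right_diff_distrib)
    thus ?thesis using M P by linarith
  qed
  have "bregman_ent z (hd_update A b x) \<le> (\<Sum>i\<in>UNIV. (z$i * ln (z$i / x$i) - z$i + x$i)
          + (z$i * (a * g$i) - x$i * (a * g$i) + x$i * (a * g$i)\<^sup>2))"
    unfolding bregman_ent_def upd by (rule sum_mono) (rule tm)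
  also have "\<dots> = bregman_ent z x - a * (g \<bullet> (x - z)) + a\<^sup>2 * N"
    unfolding bregman_ent_def N_def local_norm_sq_def inner_vec_def
    by (simp add: sum.distrib sum_subtractf sum_distrib_left power_mult_distrib algebra_simps)
  also have "\<dots> = bregman_ent z x - 2 * a * f + a\<^sup>2 * N" using f2 by simp
  also have "\<dots> \<le> bregman_ent z x - a * f"
  proof -
    have "a * N \<le> f" using aN Npos by (simp add: field_simps)
    hence "a * (a * N) \<le> a * f" using apos by (simp add: mult_left_mono)
    thus ?thesis by (simp add: power2_eq_square algebra_simps)
  qed
  finally show "bregman_ent z (hd_update A b x) \<le> bregman_ent z x - hd_step_size A b x * lsq_f A b x"
    by (simp add: a_def f_def)
qed

lemma L_nonneg: fixes A :: "real^'n^'m" shows "0 \<le> max_col_norm_sq A"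
proof -
  obtain j :: 'n where True by simp
  have "0 \<le> (\<Sum>i\<in>UNIV. (A$i$j)\<^sup>2)" by (simp add: sum_nonneg)
  also have "\<dots> \<le> max_col_norm_sq A" unfolding max_col_norm_sq_def by (rule Max_ge) auto
  finally show ?thesis .
qed

lemma col_norm_sq: "(norm (column j A))\<^sup>2 \<le> max_col_norm_sq A"
proof -
  have "(norm (column j A))\<^sup>2 = (\<Sum>i\<in>UNIV. (A$i$j)\<^sup>2)"
    unfolding power2_norm_eq_inner by (simp add: inner_vec_def column_def power2_eq_square)
  also have "\<dots> \<le> max_col_norm_sq A" unfolding max_col_norm_sq_def by (rule Max_ge) auto
  finally show ?thesis .
qed

lemma col_norm: "norm (column j A) \<le> sqrt (max_col_norm_sq A)"
  using col_norm_sq by (rule real_le_rsqrt)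

lemma grad_inner: "lsq_grad A b x $ j = column j A \<bullet> (A *v x - b)"
  by (simp add: grad_comp inner_vec_def column_def)

lemma grad_sq: "(lsq_grad A b x $ j)\<^sup>2 \<le> max_col_norm_sq A * (2 * lsq_f A b x)"
proof -
  have "\<bar>lsq_grad A b x $ j\<bar> \<le> norm (column j A) * norm (A *v x - b)"
    unfolding grad_inner by (rule Cauchy_Schwarz_ineq2)
  hence "(lsq_grad A b x $ j)\<^sup>2 \<le> (norm (column j A) * norm (A *v x - b))\<^sup>2"
    by (metis abs_ge_zero power2_abs power_mono)
  also have "\<dots> = (norm (column j A))\<^sup>2 * (norm (A *v x - b))\<^sup>2" by (simp add: power_mult_distrib)
  also have "\<dots> \<le> max_col_norm_sq A * (norm (A *v x - b))\<^sup>2"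
    using col_norm_sq by (rule mult_right_mono) simp
  finally show ?thesis by (simp add: lsq_f_def)
qed

lemma norm_res:
  assumes z: "z \<in> feasible_set A b"
  shows "norm (A *v x - b) \<le> sqrt (max_col_norm_sq A) * (\<Sum>l\<in>UNIV. \<bar>x$l - z$l\<bar>)"
proof -
  have Az: "A *v z = b" using z by (simp add: feasible_set_def)
  have "A *v x - b = A *v (x - z)" using Az by (simp add: matrix_vector_mult_diff_distrib)
  also have "\<dots> = (\<Sum>l\<in>UNIV. (x - z)$l *\<^sub>R column l A)"
    by (simp add: matrix_mult_sum scalar_mult_eq_scaleR)
  finally have eq: "A *v x - b = (\<Sum>l\<in>UNIV. (x - z)$l *\<^sub>R column l A)" .
  have "norm (A *v x - b) \<le> (\<Sum>l\<in>UNIV. norm ((x - z)$l *\<^sub>R column l A))"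
    unfolding eq by (rule norm_sum)
  also have "\<dots> \<le> (\<Sum>l\<in>UNIV. \<bar>x$l - z$l\<bar> * sqrt (max_col_norm_sq A))"
    by (rule sum_mono) (simp add: col_norm mult_left_mono)
  finally show ?thesis by (simp add: sum_distrib_left mult.commute)
qed

lemma grad_abs:
  assumes z: "z \<in> feasible_set A b"
  shows "\<bar>lsq_grad A b x $ j\<bar> \<le> max_col_norm_sq A * (\<Sum>l\<in>UNIV. \<bar>x$l - z$l\<bar>)"
proof -
  have "\<bar>lsq_grad A b x $ j\<bar> \<le> norm (column j A) * norm (A *v x - b)"
    unfolding grad_inner by (rule Cauchy_Schwarz_ineq2)
  also have "\<dots> \<le> sqrt (max_col_norm_sq A) * (sqrt (max_col_norm_sq A) * (\<Sum>l\<in>UNIV. \<bar>x$l - z$l\<bar>))"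
    by (rule mult_mono) (use col_norm norm_res[OF z] L_nonneg[of A] in auto)
  also have "\<dots> = max_col_norm_sq A * (\<Sum>l\<in>UNIV. \<bar>x$l - z$l\<bar>)"
    using L_nonneg[of A] by (simp add: mult.assoc[symmetric])
  finally show ?thesis .
qed

lemma step_lb:
  fixes A :: "real^'n^'m"
  assumes xpos: "\<forall>i. 0 < x$i" and z: "z \<in> feasible_set A b"
    and g0: "lsq_grad A b x \<noteq> 0" and DR: "bregman_ent z x \<le> R"
  shows "1 / (4 * max_col_norm_sq A * (R + one_norm z)) \<le> hd_step_size A b x"
proof -
  define L where "L = max_col_norm_sq A"
  define c where "c = one_norm z"
  define g where "g = lsq_grad A b x"
  define f where "f = lsq_f A b x"
  define N where "N = local_norm_sq x g"
  define S where "S = sup_norm g"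
  have zn: "\<forall>i. 0 \<le> z$i" using z by (simp add: feasible_set_def)
  have cz: "c = (\<Sum>i\<in>UNIV. z$i)" using zn by (simp add: c_def one_norm_def)
  have c0: "0 \<le> c" using zn cz by (simp add: sum_nonneg)
  have sx: "(\<Sum>i\<in>UNIV. x$i) \<le> 2 * (R + c)"
    using sum_bound[of z x] zn xpos DR by (simp add: c_def)
  have sxpos: "0 < (\<Sum>i\<in>UNIV. x$i)" using xpos by (intro sum_pos) auto
  have Rc: "0 < R + c" using sx sxpos by (smt (verit))
  have R0: "0 \<le> R" using bregman_nonneg[of z x] zn xpos DR by simp
  have apos: "0 < hd_step_size A b x" using descent(2)[OF xpos z g0] .
  show ?thesis
  proof (cases "L = 0")
    case True thus ?thesis using apos by (simp add: L_def)
  next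
    case False
    hence Lpos: "0 < L" using L_nonneg[of A] by (simp add: L_def)
    obtain j where gj: "g$j \<noteq> 0" using g0 unfolding g_def by (metis vec_eq_iff zero_index)
    have fpos: "0 < f"
    proof -
      have "f \<noteq> 0"
      proof
        assume "f = 0"
        hence "A *v x - b = 0" by (simp add: f_def lsq_f_def)
        hence "g = 0" by (simp add: g_def lsq_grad_def)
        thus False using gj by simp
      qed
      thus ?thesis using f_nonneg[of A b x] f_def by simp
    qed
    have Npos: "0 < N"
    proof -
      have "0 < x$j * (g$j)\<^sup>2" using xpos gj by simp
      also have "\<dots> \<le> N" unfolding N_def local_norm_sq_def
        by (rule member_le_sum[where f="\<lambda>i. x$i * (g$i)\<^sup>2"]) (use xpos in \<open>simp_all add: less_imp_le\<close>)
      finally show ?thesis .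
    qed
    have NB: "N \<le> 4 * L * f * (R + c)"
    proof -
      have "N \<le> (\<Sum>i\<in>UNIV. x$i * (L * (2 * f)))" unfolding N_def local_norm_sq_def
        by (rule sum_mono) (use xpos grad_sq in \<open>auto intro: mult_left_mono less_imp_le simp: g_def L_def f_def\<close>)
      also have "\<dots> = (L * (2 * f)) * (\<Sum>i\<in>UNIV. x$i)" by (simp add: sum_distrib_right mult.commute)
      also have "\<dots> \<le> (L * (2 * f)) * (2 * (R + c))" using sx Lpos fpos by (intro mult_left_mono) auto
      finally show ?thesis by (simp add: algebra_simps)
    qed
    have b1: "1 / (4 * L * (R + c)) \<le> f / N"
    proof -
      have "f / (4 * L * f * (R + c)) \<le> f / N" using NB Npos fpos by (intro divide_left_mono) auto
      moreover have "f / (4 * L * f * (R + c)) = 1 / (4 * L * (R + c))" using fpos by simp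
      ultimately show ?thesis by simp
    qed
    obtain j0 where Sj: "S = \<bar>g$j0\<bar>" using sup_norm_attained unfolding S_def by blast
    have Spos: "0 < S" using sup_norm_ge[of g j] gj unfolding S_def by linarith
    have SB: "S \<le> 3 * L * (R + c)"
    proof -
      have "S \<le> L * (\<Sum>l\<in>UNIV. \<bar>x$l - z$l\<bar>)" using grad_abs[OF z, of x j0] Sj by (simp add: g_def L_def)
      also have "(\<Sum>l\<in>UNIV. \<bar>x$l - z$l\<bar>) \<le> (\<Sum>l\<in>UNIV. x$l + z$l)"
        by (rule sum_mono) (use xpos zn in \<open>smt (verit)\<close>)
      also have "\<dots> = (\<Sum>l\<in>UNIV. x$l) + c" using cz by (simp add: sum.distrib)
      finally have "S \<le> L * ((\<Sum>l\<in>UNIV. x$l) + c)" using Lpos by (simp add: mult_left_mono)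
      also have "\<dots> \<le> L * (3 * (R + c))" using sx c0 Lpos R0 by (intro mult_left_mono) auto
      finally show ?thesis by (simp add: algebra_simps)
    qed
    have b2: "1 / (4 * L * (R + c)) \<le> 179/100 / S"
    proof -
      have "179/100 / (3 * L * (R + c)) \<le> 179/100 / S" using SB Spos by (intro divide_left_mono) auto
      moreover have "1 / (4 * L * (R + c)) \<le> 179/100 / (3 * L * (R + c))"
        using Lpos Rc by (intro frac_le) auto
      ultimately show ?thesis by simp
    qed
    have "hd_step_size A b x = min (f / N) (179/100 / S)"
      by (simp add: hd_step_size_def f_def N_def S_def g_def)
    thus ?thesis using b1 b2 by (simp add: L_def c_def)
  qed
qed



lemma L_zero_A:
  fixes A :: "real^'n^'m" assumes "max_col_norm_sq A = 0" shows "A = 0"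
proof -
  have "A$i$j = 0" for i j
  proof -
    have "(A$i$j)\<^sup>2 \<le> (\<Sum>i\<in>UNIV. (A$i$j)\<^sup>2)"
      by (rule member_le_sum[where f="\<lambda>i. (A$i$j)\<^sup>2"]) auto
    also have "\<dots> \<le> max_col_norm_sq A" unfolding max_col_norm_sq_def by (rule Max_ge) auto
    finally show ?thesis using assms by simp
  qed
  thus ?thesis by (simp add: vec_eq_iff)
qed

lemma upd_same: "lsq_grad A b x = 0 \<Longrightarrow> hd_update A b x = x"
  by (simp add: hd_update_def)

theorem theorem4p2:
  fixes A :: "real^'n^'m" and b :: "real^'m" and x :: "nat \<Rightarrow> real^'n"
  assumes nonempty: "feasible_set A b \<noteq> {}"
    and x0_pos: "\<forall>i. x 0 $ i > 0"
    and iter: "\<forall>k. x (Suc k) = hd_update A b (x k)"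
  shows "\<exists>xs \<in> feasible_set A b. x \<longlonglongrightarrow> xs \<and>
           (\<forall>k. Min ((\<lambda>i. lsq_f A b (x i)) ` {0..k}) \<le>
                4 * bregman_ent xs (x 0) * (bregman_ent xs (x 0) + one_norm xs) * max_col_norm_sq A
                / (real k + 1))"
proof -
  define L where "L = max_col_norm_sq A"
  define f where "f k = lsq_f A b (x k)" for k
  have L0: "0 \<le> L" using L_nonneg[of A] by (simp add: L_def)
  have f0: "0 \<le> f k" for k by (simp add: f_def f_nonneg)
  have pos: "\<forall>i. 0 < x k $ i" for k
  proof (induction k)
    case 0 thus ?case using x0_pos by simp
  next
    case (Suc k)
    show ?case
    proof (cases "lsq_grad A b (x k) = 0")
      case True thus ?thesis using Suc iter upd_same[OF True] by simp
    next
      case False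
      obtain z where z: "z \<in> feasible_set A b" using nonempty by blast
      show ?thesis using descent(3)[OF Suc z False] iter by simp
    qed
  qed
  have mono: "bregman_ent z (x (Suc k)) \<le> bregman_ent z (x k)" if z: "z \<in> feasible_set A b" for z k
  proof (cases "lsq_grad A b (x k) = 0")
    case True thus ?thesis using iter upd_same[OF True] by simp
  next
    case False
    have "0 \<le> hd_step_size A b (x k) * lsq_f A b (x k)"
      using descent(2)[OF pos z False] f_nonneg[of A b "x k"] by simp
    thus ?thesis using descent(1)[OF pos z False] iter by simp
  qed
  have bnd: "bregman_ent z (x k) \<le> bregman_ent z (x 0)" if z: "z \<in> feasible_set A b" for z k
  proof (induction k)
    case (Suc k) thus ?case using mono[OF z, of k] by simp
  qed simp
  define \<beta> where "\<beta> z = 1 / (4 * L * (bregman_ent z (x 0) + one_norm z))" for z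
  have dec: "bregman_ent z (x (Suc k)) \<le> bregman_ent z (x k) - \<beta> z * f k"
    if z: "z \<in> feasible_set A b" for z k
  proof (cases "lsq_grad A b (x k) = 0")
    case True thus ?thesis using iter upd_same[OF True] grad_zero_f[OF z True] by (simp add: f_def)
  next
    case False
    have "\<beta> z \<le> hd_step_size A b (x k)"
      unfolding \<beta>_def L_def by (rule step_lb[OF pos z False bnd[OF z]])
    hence "\<beta> z * f k \<le> hd_step_size A b (x k) * lsq_f A b (x k)"
      using f0[of k] by (simp add: f_def mult_right_mono)
    thus ?thesis using descent(1)[OF pos z False] iter by simp
  qed
  have tele: "\<beta> z * (\<Sum>i<k. f i) \<le> bregman_ent z (x 0) - bregman_ent z (x k)"
    if z: "z \<in> feasible_set A b" for z k
  proof (induction k)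
    case (Suc k) thus ?case using dec[OF z, of k] by (simp add: distrib_left)
  qed simp
  have feas_nn: "\<forall>i. 0 \<le> z$i" if "z \<in> feasible_set A b" for z
    using that by (simp add: feasible_set_def)
  have Dnn: "0 \<le> bregman_ent z (x k)" if z: "z \<in> feasible_set A b" for z k
    using bregman_nonneg[OF feas_nn[OF z] pos] .
  have Rcpos: "0 < bregman_ent z (x 0) + one_norm z" if z: "z \<in> feasible_set A b" for z
  proof -
    have "(\<Sum>i\<in>UNIV. x 0 $ i) \<le> 2 * (bregman_ent z (x 0) + one_norm z)"
      using sum_bound[OF feas_nn[OF z] pos] .
    moreover have "0 < (\<Sum>i\<in>UNIV. x 0 $ i)" using pos by (intro sum_pos) auto
    ultimately show ?thesis by (smt (verit))
  qed
  have rate: "Min (f ` {0..k}) \<le> 4 * bregman_ent z (x 0) * (bregman_ent z (x 0) + one_norm z) * L / (real k + 1)"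
    if z: "z \<in> feasible_set A b" for z k
  proof (cases "L = 0")
    case True
    hence A0: "A = 0" using L_zero_A L_def by metis
    hence "b = 0" using z by (simp add: feasible_set_def)
    hence "f i = 0" for i using A0 by (simp add: f_def lsq_f_def)
    hence "f ` {0..k} = {0}" by auto
    thus ?thesis using True by simp
  next
    case False
    define R where "R = bregman_ent z (x 0)"
    define c where "c = one_norm z"
    have Rc: "0 < R + c" using Rcpos[OF z] by (simp add: R_def c_def)
    have Lp: "0 < L" using False L0 by simp
    have bp: "0 < \<beta> z" using Lp Rc by (simp add: \<beta>_def R_def c_def)
    define m where "m = Min (f ` {0..k})"
    have "m \<le> f i" if "i < Suc k" for i unfolding m_def by (rule Min_le) (use that in auto)
    hence "(\<Sum>i<Suc k. m) \<le> (\<Sum>i<Suc k. f i)" by (intro sum_mono) auto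
    hence "(real k + 1) * m \<le> (\<Sum>i<Suc k. f i)" by (simp add: add.commute)
    moreover have "\<beta> z * (\<Sum>i<Suc k. f i) \<le> R"
      using tele[OF z, of "Suc k"] Dnn[OF z, of "Suc k"] by (simp add: R_def)
    ultimately have "\<beta> z * ((real k + 1) * m) \<le> R" using bp
      by (meson mult_left_mono order_trans less_imp_le)
    hence "m * (\<beta> z * (real k + 1)) \<le> R" by (simp add: algebra_simps)
    moreover have X: "0 < \<beta> z * (real k + 1)" using bp by simp
    ultimately have "m \<le> R / (\<beta> z * (real k + 1))" by (simp add: pos_le_divide_eq)
    also have "R / (\<beta> z * (real k + 1)) = 4 * R * (R + c) * L / (real k + 1)"
      using Lp Rc by (simp add: \<beta>_def R_def c_def field_simps)
    finally show ?thesis by (simp add: m_def R_def c_def)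
  qed
  obtain z0 where z0: "z0 \<in> feasible_set A b" using nonempty by blast
  obtain xs where xs: "xs \<in> feasible_set A b" and lim: "x \<longlonglongrightarrow> xs"
  proof (cases "L = 0")
    case True
    hence A0: "A = 0" using L_zero_A L_def by metis
    hence b0: "b = 0" using z0 by (simp add: feasible_set_def)
    have "x k = x 0" for k
    proof (induction k)
      case (Suc k)
      have "lsq_grad A b (x k) = 0" using A0 by (simp add: lsq_grad_def)
      thus ?case using Suc iter upd_same[OF \<open>lsq_grad A b (x k) = 0\<close>] by simp
    qed simp
    moreover have "x 0 \<in> feasible_set A b" using A0 b0 pos[of 0] by (simp add: feasible_set_def less_imp_le)
    ultimately have "x = (\<lambda>_. x 0)" "x 0 \<in> feasible_set A b" by auto
    moreover have "(\<lambda>_. x 0) \<longlonglongrightarrow> x 0" by (rule tendsto_const)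
    ultimately show ?thesis using that[of "x 0"] by simp
  next
    case False
    define R0 where "R0 = bregman_ent z0 (x 0)"
    define c0 where "c0 = one_norm z0"
    have Rc: "0 < R0 + c0" using Rcpos[OF z0] by (simp add: R0_def c0_def)
    have Lp: "0 < L" using False L0 by simp
    have bp: "0 < \<beta> z0" using Lp Rc by (simp add: \<beta>_def R0_def c0_def)
    have "(\<Sum>i<k. f i) \<le> R0 / \<beta> z0" for k
    proof -
      have "\<beta> z0 * (\<Sum>i<k. f i) \<le> R0" using tele[OF z0, of k] Dnn[OF z0, of k] by (simp add: R0_def)
      thus ?thesis using bp by (simp add: field_simps)
    qed
    hence "summable f" by (intro summableI_nonneg_bounded[where x="R0 / \<beta> z0"]) (use f0 in auto)
    hence flim: "f \<longlonglongrightarrow> 0" by (rule summable_LIMSEQ_zero)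
    have "norm (x k) \<le> 2 * (R0 + c0)" for k
    proof -
      have "norm (x k) \<le> (\<Sum>i\<in>UNIV. \<bar>x k $ i\<bar>)" by (rule norm_le_l1_cart)
      also have "\<dots> = (\<Sum>i\<in>UNIV. x k $ i)" using pos[of k] by (intro sum.cong) (auto simp: less_imp_le)
      also have "\<dots> \<le> 2 * (bregman_ent z0 (x k) + c0)"
        using sum_bound[OF feas_nn[OF z0] pos] by (simp add: c0_def)
      also have "\<dots> \<le> 2 * (R0 + c0)" using bnd[OF z0, of k] by (simp add: R0_def)
      finally show ?thesis .
    qed
    hence "bounded (range x)" unfolding bounded_iff by blast
    then obtain l r where r: "strict_mono r" and lr: "(x \<circ> r) \<longlonglongrightarrow> l"
      using bounded_imp_convergent_subsequence by blast
    have lrc: "(\<lambda>j. x (r j) $ i) \<longlonglongrightarrow> l $ i" for i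
      using tendsto_vec_nth[OF lr, of i] by (simp add: o_def)
    have lnn: "0 \<le> l $ i" for i
      by (rule LIMSEQ_le_const[OF lrc]) (use pos in \<open>auto intro: less_imp_le\<close>)
    have "(\<lambda>j. lsq_f A b (x (r j))) \<longlonglongrightarrow> lsq_f A b l"
    proof -
      have "(\<lambda>j. A *v x (r j)) \<longlonglongrightarrow> A *v l"
        using bounded_linear.tendsto[OF matrix_vector_mul_bounded_linear[of A] lr] by (simp add: o_def)
      thus ?thesis unfolding lsq_f_def by (intro tendsto_intros)
    qed
    moreover have "(\<lambda>j. lsq_f A b (x (r j))) \<longlonglongrightarrow> 0"
      using LIMSEQ_subseq_LIMSEQ[OF flim r] by (simp add: o_def f_def)
    ultimately have "lsq_f A b l = 0" by (rule LIMSEQ_unique)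
    hence "A *v l = b" by (simp add: lsq_f_def)
    hence lfeas: "l \<in> feasible_set A b" using lnn by (simp add: feasible_set_def)
    have Dsub: "(\<lambda>j. bregman_ent l (x (r j))) \<longlonglongrightarrow> 0"
    proof -
      have "(\<lambda>j. l$i * ln (l$i / x (r j) $ i) - l$i + x (r j) $ i) \<longlonglongrightarrow> 0" for i
      proof (cases "l$i = 0")
        case True thus ?thesis using lrc[of i] by simp
      next
        case False
        have "(\<lambda>j. l$i * ln (l$i / x (r j) $ i) - l$i + x (r j) $ i) \<longlonglongrightarrow>
              l$i * ln (l$i / l$i) - l$i + l$i"
          using False by (intro tendsto_intros lrc) auto
        thus ?thesis using False by simp
      qed
      note T = this
      have "(\<lambda>j. \<Sum>i\<in>UNIV. l$i * ln (l$i / x (r j) $ i) - l$i + x (r j) $ i) \<longlonglongrightarrow> 0"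
        by (rule tendsto_null_sum) (rule T)
      thus ?thesis by (simp add: bregman_ent_def)
    qed
    have Dlim: "(\<lambda>k. bregman_ent l (x k)) \<longlonglongrightarrow> 0"
    proof (rule LIMSEQ_I)
      fix e :: real assume e: "0 < e"
      obtain j where j: "bregman_ent l (x (r j)) < e"
        using LIMSEQ_D[OF Dsub e] by (metis order.refl real_norm_def abs_less_iff diff_zero)
      have "bregman_ent l (x n) \<le> bregman_ent l (x (r j))" if "r j \<le> n" for n
        using that
      proof (induction n rule: dec_induct)
        case (step n) thus ?case using mono[OF lfeas, of n] by simp
      qed simp
      thus "\<exists>no. \<forall>n\<ge>no. norm (bregman_ent l (x n) - 0) < e"
        using j Dnn[OF lfeas] by (metis abs_of_nonneg diff_zero le_less_trans real_norm_def)
    qed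
    have "x \<longlonglongrightarrow> l"
    proof (rule vec_tendstoI)
      fix i
      have sq: "(\<lambda>k. (sqrt (l$i) - sqrt (x k $ i))\<^sup>2) \<longlonglongrightarrow> 0"
        by (rule tendsto_sandwich[of "\<lambda>_. 0" _ _ "\<lambda>k. bregman_ent l (x k)"])
           (use Dlim bregman_term_le[OF feas_nn[OF lfeas] pos] in auto)
      have "(\<lambda>k. sqrt ((sqrt (l$i) - sqrt (x k $ i))\<^sup>2)) \<longlonglongrightarrow> sqrt 0"
        by (intro tendsto_intros sq)
      hence "(\<lambda>k. \<bar>sqrt (l$i) - sqrt (x k $ i)\<bar>) \<longlonglongrightarrow> 0" by simp
      hence "(\<lambda>k. sqrt (l$i) - sqrt (x k $ i)) \<longlonglongrightarrow> 0" by (rule tendsto_rabs_zero_cancel)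
      hence "(\<lambda>k. sqrt (l$i) - (sqrt (l$i) - sqrt (x k $ i))) \<longlonglongrightarrow> sqrt (l$i) - 0"
        by (intro tendsto_intros)
      hence "(\<lambda>k. sqrt (x k $ i)) \<longlonglongrightarrow> sqrt (l$i)" by simp
      hence "(\<lambda>k. (sqrt (x k $ i))\<^sup>2) \<longlonglongrightarrow> (sqrt (l$i))\<^sup>2" by (rule tendsto_power)
      thus "(\<lambda>k. x k $ i) \<longlonglongrightarrow> l $ i" using lnn[of i] pos by (simp add: less_imp_le)
    qed
    thus ?thesis using that lfeas by blast
  qed
  show ?thesis
    using xs lim rate[OF xs] by (auto simp: f_def L_def)
qed


end
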